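(* Let $L\ge2$, $d\in\mathbb{N}_+$, and let $W_l(t)\in\mathbb{R}^{d\times d}$, $l\in[L]$, be gradient descent iterates for the loss $\ell=\frac12\|W_{L:1}X-Y\|_F^2$, where $X\in\mathbb{R}^{d\times N}$ satisfies $XX^\top=I_d$ and $Y\in\mathbb{R}^{d\times N}$, with update $$W_l(t)=(1-\eta\lambda)W_l(t-1)-\eta\,W_{L:l+1}^\top(t-1)\,\Gamma(t-1)\,W_{l-1:1}^\top(t-1),\quad \Gamma(t)=(W_{L:1}(t)X-Y)X^\top,$$ learning rate $\eta>0$, weight decay $\lambda\ge0$, and initialization $W_l^\top(0)W_l(0)=\varepsilon^2 I_d$ for all $l\in[L]$, $\varepsilon>0$. Let $\Phi=YX^\top$ have rank $r\in\mathbb{N}_+$ and suppose $m:=d-2r>0$. Then there exist orthonormal sets $\{u_i^{(l)}\}_{i=1}^m\subset\mathbb{R}^d$ and $\{v_i^{(l)}\}_{i=1}^m\subset\mathbb{R}^d$, $l\in[L]$, with $v_i^{(l+1)}=u_i^{(l)}$ for all $l\in[L-1]$ and $i\in[m]$, such that for all $t\ge0$, all $i\in[m]$ and all $l\in[L]$: (A) $W_l(t)v_i^{(l)}=\rho(t)u_i^{(l)}$; (B) $W_l^\top(t)u_i^{(l)}=\rho(t)v_i^{(l)}$; (C) $\Phi^\top W_{L:l+1}(t)u_i^{(l)}=0$; (D) $\Phi\,W_{l-1:1}^\top(t)v_i^{(l)}=0$, where $\rho(0)=\varepsilon$ and $\rho(t)=\rho(t-1)\big(1-\eta\lambda-\eta\,\rho(t-1)^{2(L-1)}\big)$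 for $t\ge1$.
   Context: $[L]=\{1,\dots,L\}$. $W_{j:i}=W_j\cdots W_i$ and $W_{j:i}^\top=W_i^\top\cdots W_j^\top$ for $j\ge i$; both are the identity if $j<i$. *)

theory Defs
  imports "HOL-Analysis.Analysis"
begin

text \<open>mprod A i j = A j ** A (j-1) ** ... ** A i  (= W_{j:i}); identity if j < i.\<close>
primrec mprod :: "(nat \<Rightarrow> real^'d^'d) \<Rightarrow> nat \<Rightarrow> nat \<Rightarrow> real^'d^'d" where
  "mprod A i 0 = (if i = 0 then A 0 else mat 1)"
| "mprod A i (Suc j) = (if Suc j < i then mat 1 else A (Suc j) ** mprod A i j)"

primrec rho :: "real \<Rightarrow> real \<Rightarrow> real \<Rightarrow> nat \<Rightarrow> nat \<Rightarrow> real" where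
  "rho eps eta lam L 0 = eps"
| "rho eps eta lam L (Suc t) =
     rho eps eta lam L t * (1 - eta * lam - eta * (rho eps eta lam L t) ^ (2 * (L - 1)))"

end

theory Submission imports Defs begin


declare transpose_matrix_vector[simp del]

lemma mprod_id: "1 \<le> k \<Longrightarrow> j < k \<Longrightarrow> mprod A k j = mat 1"
  by (cases j) auto

lemma mprod_step: "1 \<le> k \<Longrightarrow> k \<le> Suc j \<Longrightarrow> mprod A k (Suc j) = A (Suc j) ** mprod A k j"
  by simp

lemma inner_transpose: "(transpose A *v x) \<bullet> y = x \<bullet> (A *v (y::real^'n))"
  by (simp add: dot_lmul_matrix transpose_matrix_vector)

lemma transpose_diff: "transpose (A - B) = transpose A - (transpose B :: 'a::ring^'n^'m)"
  by (simp add: transpose_def vec_eq_iff)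

lemma Gamma_v:
  fixes M :: "real^'d^'d" and X Y :: "real^'n^'d"
  assumes XX: "X ** transpose X = mat 1"
  shows "((M ** X - Y) ** transpose X) *v w = M *v w - (Y ** transpose X) *v w"
proof -
  have "((M ** X - Y) ** transpose X) *v w = (M ** X) *v (transpose X *v w) - Y *v (transpose X *v w)"
    by (simp add: matrix_vector_mul_assoc[symmetric] matrix_vector_mult_diff_rdistrib)
  also have "\<dots> = M *v w - (Y ** transpose X) *v w"
  proof -
    have "(M ** X) *v (transpose X *v w) = M *v ((X ** transpose X) *v w)"
      by (simp add: matrix_vector_mul_assoc matrix_mul_assoc)
    moreover have "Y *v (transpose X *v w) = (Y ** transpose X) *v w"
      by (simp add: matrix_vector_mul_assoc)
    ultimately show ?thesis using XX by simp
  qed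
  finally show ?thesis .
qed

lemma Gamma_tv:
  fixes M :: "real^'d^'d" and X Y :: "real^'n^'d"
  assumes XX: "X ** transpose X = mat 1"
  shows "transpose ((M ** X - Y) ** transpose X) *v w = transpose M *v w - transpose (Y ** transpose X) *v w"
proof -
  have "transpose ((M ** X - Y) ** transpose X) *v w = X *v (transpose X *v (transpose M *v w)) - X *v (transpose Y *v w)"
    by (simp add: matrix_transpose_mul transpose_diff matrix_vector_mul_assoc[symmetric] matrix_vector_mult_diff_rdistrib
       matrix_vector_mult_diff_distrib)
  also have "\<dots> = transpose M *v w - transpose (Y ** transpose X) *v w"
  proof -
    have "X *v (transpose X *v z) = z" for z :: "real^'d"
      by (simp add: matrix_vector_mul_assoc XX)
    moreover have "X *v (transpose Y *v w) = transpose (Y ** transpose X) *v w"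
      by (simp add: matrix_vector_mul_assoc matrix_transpose_mul)
    ultimately show ?thesis by simp
  qed
  finally show ?thesis .
qed

locale chain =
  fixes A :: "nat \<Rightarrow> real^'d^'d" and u v :: "nat \<Rightarrow> real^'d" and \<rho> :: real and L :: nat
  assumes HA: "\<And>l. l \<in> {1..L} \<Longrightarrow> A l *v v l = \<rho> *\<^sub>R u l"
    and HB: "\<And>l. l \<in> {1..L} \<Longrightarrow> transpose (A l) *v u l = \<rho> *\<^sub>R v l"
    and Hc: "\<And>l. l \<in> {1..L-1} \<Longrightarrow> v (l+1) = u l"
begin

lemma L1: "1 \<le> k \<Longrightarrow> k \<le> j \<Longrightarrow> j \<le> L \<Longrightarrow> mprod A k j *v v k = \<rho>^(j+1-k) *\<^sub>R u j"
proof (induction j)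
  case 0 then show ?case by simp
next
  case (Suc j)
  show ?case
  proof (cases "k = Suc j")
    case True
    then show ?thesis using Suc.prems HA[of k] by (simp add: mprod_id)
  next
    case False
    then have "k \<le> j" using Suc.prems by simp
    then have "mprod A k (Suc j) *v v k = A (Suc j) *v (\<rho>^(j+1-k) *\<^sub>R u j)"
      using Suc by (simp add: matrix_vector_mul_assoc[symmetric])
    also have "\<dots> = \<rho>^(j+1-k) *\<^sub>R (A (Suc j) *v v (Suc j))"
      using Hc[of j] Suc.prems \<open>k \<le> j\<close> by (simp add: matrix_vector_mult_scaleR)
    also have "\<dots> = \<rho>^(Suc j+1-k) *\<^sub>R u (Suc j)"
      using HA[of "Suc j"] Suc.prems \<open>k \<le> j\<close> by (simp add: Suc_diff_le)
    finally show ?thesis .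
  qed
qed

lemma L2: "1 \<le> k \<Longrightarrow> k \<le> j \<Longrightarrow> j \<le> L \<Longrightarrow> transpose (mprod A k j) *v u j = \<rho>^(j+1-k) *\<^sub>R v k"
proof (induction j)
  case 0 then show ?case by simp
next
  case (Suc j)
  show ?case
  proof (cases "k = Suc j")
    case True
    then show ?thesis using Suc.prems HB[of k] by (simp add: mprod_id)
  next
    case False
    then have "k \<le> j" using Suc.prems by simp
    then have "transpose (mprod A k (Suc j)) *v u (Suc j) = transpose (mprod A k j) *v (transpose (A (Suc j)) *v u (Suc j))"
      by (simp add: matrix_transpose_mul matrix_vector_mul_assoc)
    also have "\<dots> = transpose (mprod A k j) *v (\<rho> *\<^sub>R u j)"
      using HB[of "Suc j"] Hc[of j] Suc.prems \<open>k \<le> j\<close> by simp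
    also have "\<dots> = \<rho>^(Suc j+1-k) *\<^sub>R v k"
      using Suc \<open>k \<le> j\<close> by (simp add: matrix_vector_mult_scaleR Suc_diff_le)
    finally show ?thesis .
  qed
qed

lemma L3: "1 \<le> l \<Longrightarrow> l \<le> L \<Longrightarrow> mprod A (l+1) L *v u l = \<rho>^(L-l) *\<^sub>R u L"
proof (cases "l = L")
  case True then show ?thesis by (simp add: mprod_id)
next
  case False
  assume "1 \<le> l" "l \<le> L"
  then show ?thesis using L1[of "l+1" L] Hc[of l] False by simp
qed

lemma L4: "1 \<le> l \<Longrightarrow> l \<le> L \<Longrightarrow> transpose (mprod A (l+1) L) *v u L = \<rho>^(L-l) *\<^sub>R u l"
proof (cases "l = L")
  case True then show ?thesis by (simp add: mprod_id)
next
  case False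
  assume "1 \<le> l" "l \<le> L"
  then show ?thesis using L2[of "l+1" L] Hc[of l] False by simp
qed

lemma L5: "1 \<le> l \<Longrightarrow> l \<le> L \<Longrightarrow> transpose (mprod A 1 (l-1)) *v v l = \<rho>^(l-1) *\<^sub>R v 1"
proof (cases "l = 1")
  case True then show ?thesis by simp
next
  case False
  assume "1 \<le> l" "l \<le> L"
  moreover have "l-1 \<in> {1..L-1}" using False \<open>1 \<le> l\<close> \<open>l \<le> L\<close> by auto
  from Hc[OF this] have "v l = u (l-1)" using False \<open>1 \<le> l\<close> by simp
  ultimately show ?thesis using L2[of 1 "l-1"] False by simp
qed

lemma L6: "1 \<le> l \<Longrightarrow> l \<le> L \<Longrightarrow> mprod A 1 (l-1) *v v 1 = \<rho>^(l-1) *\<^sub>R v l"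
proof (cases "l = 1")
  case True then show ?thesis by simp
next
  case False
  assume "1 \<le> l" "l \<le> L"
  moreover have "l-1 \<in> {1..L-1}" using False \<open>1 \<le> l\<close> \<open>l \<le> L\<close> by auto
  from Hc[OF this] have "v l = u (l-1)" using False \<open>1 \<le> l\<close> by simp
  ultimately show ?thesis using L1[of 1 "l-1"] False by simp
qed

lemma step:
  fixes X Y :: "real^'n^'d"
  assumes XX: "X ** transpose X = mat 1"
    and v1: "(Y ** transpose X) *v v 1 = 0" and uL: "transpose (Y ** transpose X) *v u L = 0"
    and l: "1 \<le> l" "l \<le> L"
  shows "(transpose (mprod A (l + 1) L) ** ((mprod A 1 L ** X - Y) ** transpose X)
               ** transpose (mprod A 1 (l - 1))) *v v l = \<rho>^(2*L-1) *\<^sub>R u l"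
    and "transpose (transpose (mprod A (l + 1) L) ** ((mprod A 1 L ** X - Y) ** transpose X)
               ** transpose (mprod A 1 (l - 1))) *v u l = \<rho>^(2*L-1) *\<^sub>R v l"
proof -
  have m1: "mprod A 1 L *v v 1 = \<rho>^L *\<^sub>R u L" using L1[of 1 L] l by simp
  have m2: "transpose (mprod A 1 L) *v u L = \<rho>^L *\<^sub>R v 1" using L2[of 1 L] l by simp
  have e: "\<rho>^(l-1) * \<rho>^L * \<rho>^(L-l) = \<rho>^(2*L-1)"
    using l by (simp add: power_add[symmetric] mult_2)
  have "(transpose (mprod A (l + 1) L) ** ((mprod A 1 L ** X - Y) ** transpose X)
               ** transpose (mprod A 1 (l - 1))) *v v l
     = transpose (mprod A (l + 1) L) *v (((mprod A 1 L ** X - Y) ** transpose X) *v (\<rho>^(l-1) *\<^sub>R v 1))"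
    using L5[OF l] by (simp add: matrix_vector_mul_assoc[symmetric])
  also have "\<dots> = (\<rho>^(l-1) * \<rho>^L * \<rho>^(L-l)) *\<^sub>R u l"
    using Gamma_v[OF XX] v1 m1 L4[OF l] by (simp add: matrix_vector_mult_scaleR)
  finally show "(transpose (mprod A (l + 1) L) ** ((mprod A 1 L ** X - Y) ** transpose X)
               ** transpose (mprod A 1 (l - 1))) *v v l = \<rho>^(2*L-1) *\<^sub>R u l" using e by simp
  have "transpose (transpose (mprod A (l + 1) L) ** ((mprod A 1 L ** X - Y) ** transpose X)
               ** transpose (mprod A 1 (l - 1))) *v u l
     = mprod A 1 (l - 1) *v (transpose ((mprod A 1 L ** X - Y) ** transpose X) *v (\<rho>^(L-l) *\<^sub>R u L))"
    using L3[OF l] by (simp add: matrix_vector_mul_assoc[symmetric] matrix_transpose_mul)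
  also have "\<dots> = (\<rho>^(l-1) * \<rho>^L * \<rho>^(L-l)) *\<^sub>R v l"
    using Gamma_tv[OF XX] uL m2 L6[OF l] by (simp add: matrix_vector_mult_scaleR)
  finally show "transpose (transpose (mprod A (l + 1) L) ** ((mprod A 1 L ** X - Y) ** transpose X)
               ** transpose (mprod A 1 (l - 1))) *v u l = \<rho>^(2*L-1) *\<^sub>R v l" using e by simp
qed

end


lemma dim_Un_le: "dim (A \<union> B) \<le> dim A + dim (B :: ('a::euclidean_space) set)"
proof -
  obtain BA where BA: "BA \<subseteq> A" "independent BA" "A \<subseteq> span BA" "card BA = dim A"
    using basis_exists by blast
  obtain BB where BB: "BB \<subseteq> B" "independent BB" "B \<subseteq> span BB" "card BB = dim B"
    using basis_exists by blast
  have f: "finite (BA \<union> BB)" using BA BB independent_imp_finite by blast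
  have "A \<union> B \<subseteq> span (BA \<union> BB)" using BA BB span_mono by blast
  then have "dim (A \<union> B) \<le> card (BA \<union> BB)" using dim_le_card f by blast
  also have "\<dots> \<le> card BA + card BB" by (rule card_Un_le)
  finally show ?thesis using BA BB by simp
qed

lemma dim_UNIV_cart: "dim (UNIV :: (real^'d) set) = CARD('d)"
  by simp

lemma basis_ex:
  fixes \<Phi> P :: "real^'d^'d"
  assumes rk: "rank \<Phi> = r" and m: "m \<le> CARD('d) - 2*r"
  shows "\<exists>e. (\<forall>i\<in>{1..m}. \<forall>j\<in>{1..m}. e i \<bullet> e j = (if i=j then 1 else 0)) \<and>
             (\<forall>i\<in>{1..m}. \<Phi> *v e i = 0 \<and> transpose \<Phi> *v (P *v e i) = 0)"
proof -
  define S where "S = {x. \<Phi> *v x = 0 \<and> transpose \<Phi> *v (P *v x) = 0}"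
  have subS: "subspace S"
    unfolding S_def subspace_def
    by (simp add: matrix_vector_right_distrib matrix_vector_mult_scaleR)
  define R1 where "R1 = range (\<lambda>x. transpose \<Phi> *v x)"
  define R2 where "R2 = range (\<lambda>x. (transpose P ** \<Phi>) *v x)"
  define Orth where "Orth = {y \<in> UNIV. \<forall>x \<in> span (R1 \<union> R2). orthogonal x y}"
  have OS: "Orth \<subseteq> S"
  proof
    fix y assume y: "y \<in> Orth"
    have "\<forall>x \<in> R1 \<union> R2. x \<bullet> y = 0" using y unfolding Orth_def orthogonal_def
      by (auto simp: span_base)
    then have a: "(transpose \<Phi> *v z) \<bullet> y = 0" and b: "((transpose P ** \<Phi>) *v z) \<bullet> y = 0" for z
      unfolding R1_def R2_def by auto
    have "\<Phi> *v y = 0" using a[of "\<Phi> *v y"] by (simp add: inner_transpose)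
    moreover have "transpose \<Phi> *v (P *v y) = 0"
      using b[of "transpose \<Phi> *v (P *v y)"]
      using inner_transpose[of "transpose \<Phi>" "transpose \<Phi> *v (P *v y)" "P *v y"]
        inner_transpose[of P "\<Phi> *v (transpose \<Phi> *v (P *v y))" y]
      by (simp add: matrix_vector_mul_assoc[symmetric] matrix_transpose_mul)
    ultimately show "y \<in> S" unfolding S_def by simp
  qed
  have "dim Orth + dim (span (R1 \<union> R2)) = dim (UNIV :: (real^'d) set)"
    unfolding Orth_def by (rule dim_subspace_orthogonal_to_vectors) auto
  then have dOrth: "dim Orth + dim (R1 \<union> R2) = CARD('d)" by simp
  have "dim R1 = r" unfolding R1_def using rk by (simp add: rank_dim_range[symmetric] rank_transpose)
  moreover have "dim R2 \<le> r" unfolding R2_def using rk rank_mul_le_right[of "transpose P" \<Phi>]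
    by (simp add: rank_dim_range[symmetric])
  ultimately have "dim (R1 \<union> R2) \<le> 2 * r" using dim_Un_le[of R1 R2] by linarith
  then have "m \<le> dim Orth" using dOrth m by linarith
  also have "\<dots> \<le> dim S" using OS by (rule dim_subset)
  finally have mS: "m \<le> dim S" .
  obtain B where B: "B \<subseteq> S" "pairwise orthogonal B" "\<And>x. x \<in> B \<Longrightarrow> norm x = 1"
      "independent B" "card B = dim S" "span B = S"
    using orthonormal_basis_subspace[OF subS] by blast
  have fB: "finite B" using B independent_imp_finite by blast
  obtain g where g: "bij_betw g {1..card B} B" using ex_bij_betw_nat_finite_1[OF fB] by blast
  have sub: "{1..m} \<subseteq> {1..card B}" using mS B by auto
  show ?thesis
  proof (intro exI conjI ballI)
    fix i j assume i: "i \<in> {1..m}" and j: "j \<in> {1..m}"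
    have gi: "g i \<in> B" and gj: "g j \<in> B" using g i j sub bij_betwE by blast+
    show "g i \<bullet> g j = (if i = j then 1 else 0)"
    proof (cases "i = j")
      case True
      then show ?thesis using B(3)[OF gi] by (simp add: power2_norm_eq_inner[symmetric])
    next
      case False
      then have "g i \<noteq> g j" using g i j sub unfolding bij_betw_def inj_on_def by blast
      then show ?thesis using B(2) gi gj False unfolding pairwise_def orthogonal_def by auto
    qed
  next
    fix i assume i: "i \<in> {1..m}"
    have "g i \<in> S" using g i sub B(1) bij_betwE by blast
    then show "\<Phi> *v g i = 0" "transpose \<Phi> *v (P *v g i) = 0" unfolding S_def by auto
  qed
qed



lemma transpose_scaleR: "transpose (c *\<^sub>R A) = c *\<^sub>R transpose (A :: real^'n^'m)"
  by (simp add: transpose_def vec_eq_iff)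

lemma mprod_step': "1 \<le> k \<Longrightarrow> k \<le> l \<Longrightarrow> mprod A k l = A l ** mprod A k (l-1)"
  by (cases l) auto

lemma scaleR_mat_vec: "(c *\<^sub>R A) *v x = c *\<^sub>R (A *v (x::real^'n))"
  by (simp add: matrix_vector_mult_def vec_eq_iff sum_distrib_left mult.assoc)

lemma mprod_inner:
  fixes Z :: "nat \<Rightarrow> real^'d^'d"
  assumes init: "\<And>l. l \<in> {1..L} \<Longrightarrow> transpose (Z l) ** Z l = (eps\<^sup>2) *\<^sub>R mat 1"
  shows "l \<le> L \<Longrightarrow> (mprod Z 1 l *v x) \<bullet> (mprod Z 1 l *v y) = eps^(2*l) * (x \<bullet> y)"
proof (induction l)
  case 0 then show ?case by simp
next
  case (Suc l)
  have "(mprod Z 1 (Suc l) *v x) \<bullet> (mprod Z 1 (Suc l) *v y)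
      = (Z (Suc l) *v (mprod Z 1 l *v x)) \<bullet> (Z (Suc l) *v (mprod Z 1 l *v y))"
    by (simp add: matrix_vector_mul_assoc)
  also have "\<dots> = (mprod Z 1 l *v x) \<bullet> ((transpose (Z (Suc l)) ** Z (Suc l)) *v (mprod Z 1 l *v y))"
    using inner_transpose[of "transpose (Z (Suc l))" "mprod Z 1 l *v x" "Z (Suc l) *v (mprod Z 1 l *v y)"]
    by (simp add: matrix_vector_mul_assoc matrix_mul_assoc)
  also have "\<dots> = eps^2 * ((mprod Z 1 l *v x) \<bullet> (mprod Z 1 l *v y))"
    using init[of "Suc l"] Suc.prems by (simp add: scaleR_mat_vec)
  also have "\<dots> = eps^(2 * Suc l) * (x \<bullet> y)" using Suc by (simp add: power_add power2_eq_square)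
  finally show ?case .
qed

theorem lemma1:
  fixes W :: "nat \<Rightarrow> nat \<Rightarrow> real^'d^'d"
    and X Y :: "real^'n^'d"
    and L r :: nat and eta lam eps :: real
  assumes L: "L \<ge> 2"
    and XX: "X ** transpose X = mat 1"
    and eta_pos: "eta > 0" and lam_nonneg: "lam \<ge> 0" and eps_pos: "eps > 0"
    and init: "\<And>l. l \<in> {1..L} \<Longrightarrow> transpose (W 0 l) ** W 0 l = (eps\<^sup>2) *\<^sub>R mat 1"
    and gd: "\<And>t l. t \<ge> 1 \<Longrightarrow> l \<in> {1..L} \<Longrightarrow>
        W t l = (1 - eta * lam) *\<^sub>R W (t - 1) l
          - eta *\<^sub>R (transpose (mprod (W (t - 1)) (l + 1) L)
               ** ((mprod (W (t - 1)) 1 L ** X - Y) ** transpose X)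
               ** transpose (mprod (W (t - 1)) 1 (l - 1)))"
    and rank: "rank (Y ** transpose X) = r" and r: "r \<ge> 1"
    and m: "2 * r < CARD('d)"
  shows "\<exists>u v :: nat \<Rightarrow> nat \<Rightarrow> real^'d.
      (\<forall>l\<in>{1..L}. \<forall>i\<in>{1..CARD('d) - 2 * r}. \<forall>j\<in>{1..CARD('d) - 2 * r}.
          u l i \<bullet> u l j = (if i = j then 1 else 0) \<and>
          v l i \<bullet> v l j = (if i = j then 1 else 0)) \<and>
      (\<forall>l\<in>{1..L - 1}. \<forall>i\<in>{1..CARD('d) - 2 * r}. v (l + 1) i = u l i) \<and>
      (\<forall>t. \<forall>i\<in>{1..CARD('d) - 2 * r}. \<forall>l\<in>{1..L}.
          W t l *v v l i = rho eps eta lam L t *\<^sub>R u l i \<and>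
          transpose (W t l) *v u l i = rho eps eta lam L t *\<^sub>R v l i \<and>
          transpose (Y ** transpose X) *v (mprod (W t) (l + 1) L *v u l i) = 0 \<and>
          (Y ** transpose X) *v (transpose (mprod (W t) 1 (l - 1)) *v v l i) = 0)"
proof -
  define \<Phi> where "\<Phi> = Y ** transpose X"
  define M where "M = CARD('d) - 2 * r"
  obtain e where e_on: "\<And>i j. i\<in>{1..M} \<Longrightarrow> j\<in>{1..M} \<Longrightarrow> e i \<bullet> e j = (if i=j then 1 else 0)"
    and e1: "\<And>i. i\<in>{1..M} \<Longrightarrow> \<Phi> *v e i = 0"
    and e2: "\<And>i. i\<in>{1..M} \<Longrightarrow> transpose \<Phi> *v (mprod (W 0) 1 L *v e i) = 0"
  proof -
    have "rank \<Phi> = r" using rank unfolding \<Phi>_def .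
    from basis_ex[OF this, of M "mprod (W 0) 1 L"] show ?thesis
      using that unfolding M_def by blast
  qed
  define v where "v l i = (1/eps^(l-1)) *\<^sub>R (mprod (W 0) 1 (l-1) *v e i)" for l i
  define u where "u l i = (1/eps^l) *\<^sub>R (mprod (W 0) 1 l *v e i)" for l i
  have vu: "v (l+1) i = u l i" for l i unfolding u_def v_def by simp
  have v1: "v 1 i = e i" for i unfolding v_def by simp
  have uL: "u L i = (1/eps^L) *\<^sub>R (mprod (W 0) 1 L *v e i)" for i unfolding u_def by simp
  have on: "u l i \<bullet> u l j = (if i = j then 1 else 0) \<and> v l i \<bullet> v l j = (if i = j then 1 else 0)"
    if "l \<in> {1..L}" "i \<in> {1..M}" "j \<in> {1..M}" for l i j
  proof -
    have "u l i \<bullet> u l j = (1/eps^l)^2 * eps^(2*l) * (e i \<bullet> e j)"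
      unfolding u_def using mprod_inner[where Z="W 0" and L=L, OF init] that
      by (simp add: power2_eq_square)
    also have "(1/eps^l)^2 * eps^(2*l) = 1" using eps_pos by (simp add: power_divide mult.commute[of 2 l] power_mult)
    finally have A: "u l i \<bullet> u l j = e i \<bullet> e j" by simp
    have "v l i \<bullet> v l j = (1/eps^(l-1))^2 * eps^(2*(l-1)) * (e i \<bullet> e j)"
    proof -
      have "l - 1 \<le> L" using that by auto
      from mprod_inner[where Z="W 0" and L=L, OF init this]
      show ?thesis unfolding v_def by (simp add: power2_eq_square)
    qed
    also have "(1/eps^(l-1))^2 * eps^(2*(l-1)) = 1" using eps_pos by (simp add: power_divide mult.commute[of 2] power_mult)
    finally have B: "v l i \<bullet> v l j = e i \<bullet> e j" by simp
    show ?thesis using A B e_on that by simp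
  qed
  have pw: "rho eps eta lam L t ^ (2*L-1) = rho eps eta lam L t * rho eps eta lam L t ^ (2*(L-1))" for t
  proof -
    have "2*L-1 = Suc (2*(L-1))" using L by simp
    then show ?thesis by simp
  qed
  have ch: "\<forall>i\<in>{1..M}. chain (W t) (\<lambda>l. u l i) (\<lambda>l. v l i) (rho eps eta lam L t) L" for t
  proof (induction t)
    case 0
    show ?case
    proof (intro ballI chain.intro)
      fix i l assume i: "i \<in> {1..M}" and l: "l \<in> {1..L}"
      have ms: "mprod (W 0) (Suc 0) l = W 0 l ** mprod (W 0) (Suc 0) (l-1)" using l mprod_step'[of 1 l "W 0"] by simp
      have el: "eps^l = eps * eps^(l-1)" using l by (metis atLeastAtMost_iff power_eq_if not_one_le_zero)
      show "W 0 l *v v l i = rho eps eta lam L 0 *\<^sub>R u l i"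
        unfolding u_def v_def using eps_pos
        by (simp add: ms matrix_vector_mult_scaleR matrix_vector_mul_assoc el)
      have "transpose (W 0 l) *v u l i = (1/eps^l) *\<^sub>R ((transpose (W 0 l) ** W 0 l) *v (mprod (W 0) 1 (l-1) *v e i))"
        unfolding u_def by (simp add: ms matrix_vector_mult_scaleR matrix_vector_mul_assoc matrix_mul_assoc)
      also have "\<dots> = (eps^2/eps^l) *\<^sub>R (mprod (W 0) 1 (l-1) *v e i)"
        using init[OF l] by (simp add: scaleR_mat_vec)
      also have "\<dots> = rho eps eta lam L 0 *\<^sub>R v l i"
        unfolding v_def using eps_pos by (simp add: el power2_eq_square)
      finally show "transpose (W 0 l) *v u l i = rho eps eta lam L 0 *\<^sub>R v l i" .
    next
      fix l assume "l \<in> {1..L-1}"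
      show "v (l+1) i = u l i" for i by (rule vu)
    qed
  next
    case (Suc t)
    show ?case
    proof (intro ballI chain.intro)
      fix i l assume i: "i \<in> {1..M}" and l: "l \<in> {1..L}"
      interpret c: chain "W t" "\<lambda>l. u l i" "\<lambda>l. v l i" "rho eps eta lam L t" L
        using Suc i by blast
      have st: "(1::nat) \<le> l" "l \<le> L" using l by auto
      have p1: "\<Phi> *v v 1 i = 0" using e1[OF i] v1 by simp
      have p2: "transpose \<Phi> *v u L i = 0" using e2[OF i] uL by (simp add: matrix_vector_mult_scaleR)
      note S = c.step[OF XX p1[unfolded \<Phi>_def] p2[unfolded \<Phi>_def] st]
      have W: "W (Suc t) l = (1 - eta * lam) *\<^sub>R W t l
          - eta *\<^sub>R (transpose (mprod (W t) (l + 1) L)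
               ** ((mprod (W t) 1 L ** X - Y) ** transpose X)
               ** transpose (mprod (W t) 1 (l - 1)))" using gd[of "Suc t" l] l by simp
      show "W (Suc t) l *v v l i = rho eps eta lam L (Suc t) *\<^sub>R u l i"
        unfolding W using c.HA[OF l] S(1) pw[of t]
        by (simp add: matrix_vector_mult_diff_rdistrib scaleR_mat_vec algebra_simps)
      have WT: "transpose (W (Suc t) l) = (1 - eta * lam) *\<^sub>R transpose (W t l)
          - eta *\<^sub>R transpose (transpose (mprod (W t) (l + 1) L)
               ** ((mprod (W t) 1 L ** X - Y) ** transpose X)
               ** transpose (mprod (W t) 1 (l - 1)))" unfolding W by (simp only: transpose_diff transpose_scaleR)
      show "transpose (W (Suc t) l) *v u l i = rho eps eta lam L (Suc t) *\<^sub>R v l i"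
        unfolding WT using c.HB[OF l] S(2) pw[of t]
        by (simp add: transpose_diff transpose_scaleR matrix_vector_mult_diff_rdistrib scaleR_mat_vec algebra_simps)
    next
      fix l assume "l \<in> {1..L-1}"
      show "v (l+1) i = u l i" for i by (rule vu)
    qed
  qed
  show ?thesis
  proof (intro exI conjI ballI allI)
    fix l i j assume "l \<in> {1..L}" "i \<in> {1..CARD('d) - 2 * r}" "j \<in> {1..CARD('d) - 2 * r}"
    then show "u l i \<bullet> u l j = (if i = j then 1 else 0)" "v l i \<bullet> v l j = (if i = j then 1 else 0)"
      using on unfolding M_def by auto
  next
    fix l i show "v (l + 1) i = u l i" by (rule vu)
  next
    fix t i l assume i: "i \<in> {1..CARD('d) - 2 * r}" and l: "l \<in> {1..L}"
    have i': "i \<in> {1..M}" using i unfolding M_def .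
    interpret c: chain "W t" "\<lambda>l. u l i" "\<lambda>l. v l i" "rho eps eta lam L t" L
      using ch[of t] i' by blast
    have st: "(1::nat) \<le> l" "l \<le> L" using l by auto
    have p1: "\<Phi> *v v 1 i = 0" using e1[OF i'] v1 by simp
    have p2: "transpose \<Phi> *v u L i = 0" using e2[OF i'] uL by (simp add: matrix_vector_mult_scaleR)
    show "W t l *v v l i = rho eps eta lam L t *\<^sub>R u l i" by (rule c.HA[OF l])
    show "transpose (W t l) *v u l i = rho eps eta lam L t *\<^sub>R v l i" by (rule c.HB[OF l])
    show "transpose (Y ** transpose X) *v (mprod (W t) (l + 1) L *v u l i) = 0"
      using c.L3[OF st] p2 unfolding \<Phi>_def by (simp add: matrix_vector_mult_scaleR)
    show "(Y ** transpose X) *v (transpose (mprod (W t) 1 (l - 1)) *v v l i) = 0"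
      using c.L5[OF st] p1 unfolding \<Phi>_def by (simp add: matrix_vector_mult_scaleR)
  qed
qed
end
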